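(* Let $R$ be a standard rule and let $(N,c,E,h)$ be a historical claims problem, with history-adjusted claims vector $\widetilde{c}$. Then there exists $\overline{\lambda}\in\mathbb{R}_+$ such that $$\sum_{i\in N}\min\left\{c_i,\,R_i(N,\widetilde{c},E)+\overline{\lambda}\right\}=E.$$ Moreover, if $C=\sum_{i\in N}c_i>E$, then such $\overline{\lambda}$ is unique; whereas if $C=E$, such $\overline{\lambda}$ is not unique, but the vector $\left(\min\{c_i,R_i(N,\widetilde{c},E)+\overline{\lambda}\}\right)_{i\in N}$ is the same for all such $\overline{\lambda}$.
   Context: Agents are elements of $\mathbb{N}$; $N$ denotes a nonempty finite subset of $\mathbb{N}$. A (standard) claims problem is a triple $(N,c,E)$ with $c\in\mathbb{R}_+^N$, $E\in\mathbb{R}_+$, $C=\sum_{i\in N}c_i>0$ and $E\le C$. An allocation for it is $x\in\mathbb{R}^N$ with $0\le x_i\le c_i$ for all $i$ and $\sum_{i\in N}x_i=E$. A standard rule $R$ assigns to every standard claims problem $(N,c,E)$ an allocation $R(N,c,E)$. A history for $N$ is a finite sequence $h=\{(c^{(t)},x^{(t)})\}_{t=1}^{|T|}$ where, for each $t$, $c^{(t)}\in\mathbb{R}_+^N$ and $x^{(t)}$ is an allocation of the standard claims problem $(N,c^{(t)},\sum_{i}x^{(t)}_i)$ (in particular $0\le x_i^{(t)}\le c_i^{(t)}$). A historical claims problem is a 4-tuple $(N,c,E,h)$ where $(N,c,E)$ is a standard claims problem and $h$ is a history for $N$. For each $i\in N$ let $\Delta^c_i=\sum_{t=1}^{|T|}c_i^{(t)}$,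 $\Delta^x_i=\sum_{t=1}^{|T|}x_i^{(t)}$, and the history-adjusted claim $\widetilde{c}_i=c_i+\Delta^c_i-\Delta^x_i$ (so $\widetilde{c}\ge c$ and $(N,\widetilde{c},E)$ is a standard claims problem). *)

theory Defs
  imports Complex_Main
begin

(* Agents are natural numbers; N is a nonempty finite set of agents.
   Vectors in R^N are represented as functions nat => real; only values on N matter. *)

definition claims_problem :: "nat set \<Rightarrow> (nat \<Rightarrow> real) \<Rightarrow> real \<Rightarrow> bool" where
  "claims_problem N c E \<longleftrightarrow> finite N \<and> N \<noteq> {} \<and> (\<forall>i\<in>N. 0 \<le> c i) \<and> 0 \<le> E
      \<and> sum c N > 0 \<and> E \<le> sum c N"

definition is_allocation :: "nat set \<Rightarrow> (nat \<Rightarrow> real) \<Rightarrow> real \<Rightarrow> (nat \<Rightarrow> real) \<Rightarrow> bool" where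
  "is_allocation N c E x \<longleftrightarrow> (\<forall>i\<in>N. 0 \<le> x i \<and> x i \<le> c i) \<and> sum x N = E"

definition standard_rule :: "(nat set \<Rightarrow> (nat \<Rightarrow> real) \<Rightarrow> real \<Rightarrow> (nat \<Rightarrow> real)) \<Rightarrow> bool" where
  "standard_rule R \<longleftrightarrow> (\<forall>N c E. claims_problem N c E \<longrightarrow> is_allocation N c E (R N c E))"

definition is_history :: "nat set \<Rightarrow> ((nat \<Rightarrow> real) \<times> (nat \<Rightarrow> real)) list \<Rightarrow> bool" where
  "is_history N h \<longleftrightarrow> (\<forall>(ct, xt) \<in> set h. (\<forall>i\<in>N. 0 \<le> ct i)
      \<and> claims_problem N ct (sum xt N) \<and> is_allocation N ct (sum xt N) xt)"

definition historical_claims_problem ::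
  "nat set \<Rightarrow> (nat \<Rightarrow> real) \<Rightarrow> real \<Rightarrow> ((nat \<Rightarrow> real) \<times> (nat \<Rightarrow> real)) list \<Rightarrow> bool" where
  "historical_claims_problem N c E h \<longleftrightarrow> claims_problem N c E \<and> is_history N h"

definition adjusted_claims ::
  "(nat \<Rightarrow> real) \<Rightarrow> ((nat \<Rightarrow> real) \<times> (nat \<Rightarrow> real)) list \<Rightarrow> nat \<Rightarrow> real" where
  "adjusted_claims c h i = c i + (\<Sum>t<length h. fst (h ! t) i) - (\<Sum>t<length h. snd (h ! t) i)"

end

theory Submission
  imports Defs
begin

lemma key:
  fixes N :: "nat set" and c x :: "nat \<Rightarrow> real" and E :: real
  assumes fin: "finite N" and xnn: "\<forall>i\<in>N. 0 \<le> x i" and sx: "sum x N = E"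
    and cnn: "\<forall>i\<in>N. 0 \<le> c i" and EC: "E \<le> sum c N"
  shows "(\<exists>lam::real. 0 \<le> lam \<and> (\<Sum>i\<in>N. min (c i) (x i + lam)) = E)
    \<and> (sum c N > E \<longrightarrow> (\<exists>!lam::real. 0 \<le> lam \<and> (\<Sum>i\<in>N. min (c i) (x i + lam)) = E))
    \<and> (sum c N = E \<longrightarrow>
        (\<exists>l1 l2::real. 0 \<le> l1 \<and> 0 \<le> l2 \<and> l1 \<noteq> l2
           \<and> (\<Sum>i\<in>N. min (c i) (x i + l1)) = E
           \<and> (\<Sum>i\<in>N. min (c i) (x i + l2)) = E)
      \<and> (\<forall>l1 l2::real. 0 \<le> l1 \<and> 0 \<le> l2
           \<and> (\<Sum>i\<in>N. min (c i) (x i + l1)) = E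
           \<and> (\<Sum>i\<in>N. min (c i) (x i + l2)) = E
           \<longrightarrow> (\<forall>i\<in>N. min (c i) (x i + l1) = min (c i) (x i + l2))))"
proof -
  define f where "f = (\<lambda>l. \<Sum>i\<in>N. min (c i) (x i + l))"
  define M where "M = sum c N"
  have M0: "0 \<le> M" unfolding M_def using cnn by (simp add: sum_nonneg)
  have cleM: "\<forall>i\<in>N. c i \<le> M" unfolding M_def using cnn fin
    by (auto intro: member_le_sum)
  have fbig: "f l = sum c N" if "l \<ge> M" for l
    unfolding f_def using cleM xnn that by (intro sum.cong) (auto simp: min_def, smt (verit))
  have f0: "f 0 \<le> E" unfolding f_def sx[symmetric] by (intro sum_mono) auto
  have cont: "isCont f l" for l unfolding f_def by (intro continuous_intros)
  have ex: "\<exists>lam. 0 \<le> lam \<and> f lam = E"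
  proof -
    have "f 0 \<le> E" "E \<le> f M" using f0 fbig[of M] EC by auto
    from IVT[of f 0 E M, OF this M0] cont show ?thesis by auto
  qed
  have termeq: "\<forall>i\<in>N. min (c i) (x i + l1) = min (c i) (x i + l2)"
    if le12: "l1 \<le> l2" and feq: "f l1 = f l2" for l1 l2
  proof (rule ccontr)
    assume "\<not> ?thesis"
    then obtain a where "a \<in> N" "min (c a) (x a + l1) < min (c a) (x a + l2)"
    proof -
      from \<open>\<not> _\<close> obtain a where a: "a \<in> N" "min (c a) (x a + l1) \<noteq> min (c a) (x a + l2)" by blast
      have "min (c a) (x a + l1) \<le> min (c a) (x a + l2)" using le12 by (auto simp: min_def)
      with a have "min (c a) (x a + l1) < min (c a) (x a + l2)" by linarith
      with a show ?thesis using that by blast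
    qed
    then have "f l1 < f l2" unfolding f_def using fin le12
      apply (intro sum_strict_mono_ex1)
      apply simp
     apply (auto simp: min_def)[1]
    by blast
    then show False using feq by simp
  qed
  have termeq': "\<forall>i\<in>N. min (c i) (x i + l1) = min (c i) (x i + l2)"
    if "f l1 = f l2" for l1 l2
  proof (cases "l1 \<le> l2")
    case True then show ?thesis using termeq[of l1 l2] that by blast
  next
    case False then have "l2 \<le> l1" by simp
    then have "\<forall>i\<in>N. min (c i) (x i + l2) = min (c i) (x i + l1)" using termeq[of l2 l1] that by simp
    then show ?thesis by simp
  qed
  have uniq: "l1 = l2" if gt: "sum c N > E" and fl: "f l1 = E" "f l2 = E" for l1 l2
  proof (rule ccontr)
    assume ne: "l1 \<noteq> l2"
    have X: False if ab: "a < b" "f a = E" "f b = E" for a b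
    proof -
      have te: "\<forall>i\<in>N. min (c i) (x i + a) = min (c i) (x i + b)"
        using termeq[of a b] ab by auto
      have "\<forall>i\<in>N. min (c i) (x i + a) = c i"
      proof
        fix i assume "i \<in> N"
        with te have "min (c i) (x i + a) = min (c i) (x i + b)" by auto
        then show "min (c i) (x i + a) = c i" using ab(1) unfolding min_def by (smt (verit))
      qed
      then have "f a = sum c N" unfolding f_def by simp
      with ab gt show False by simp
    qed
    show False
    proof (cases "l1 < l2")
      case True then show False using X[of l1 l2] fl by blast
    next
      case False then have "l2 < l1" using ne by simp
      then show False using X[of l2 l1] fl by blast
    qed
  qed
  have A: "\<exists>lam. 0 \<le> lam \<and> f lam = E" by (rule ex)
  have B: "sum c N > E \<longrightarrow> (\<exists>!lam. 0 \<le> lam \<and> f lam = E)"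
    using ex uniq by blast
  have C: "sum c N = E \<longrightarrow> (\<exists>l1 l2. 0 \<le> l1 \<and> 0 \<le> l2 \<and> l1 \<noteq> l2 \<and> f l1 = E \<and> f l2 = E)"
    using fbig[of M] fbig[of "M+1"] M0 by (intro impI exI[of _ M] exI[of _ "M+1"]) auto
  have D: "\<forall>l1 l2. 0 \<le> l1 \<and> 0 \<le> l2 \<and> f l1 = E \<and> f l2 = E \<longrightarrow>
       (\<forall>i\<in>N. min (c i) (x i + l1) = min (c i) (x i + l2))"
  proof (intro allI impI)
    fix l1 l2 assume "0 \<le> l1 \<and> 0 \<le> l2 \<and> f l1 = E \<and> f l2 = E"
    then have "f l1 = f l2" by simp
    then show "\<forall>i\<in>N. min (c i) (x i + l1) = min (c i) (x i + l2)" by (rule termeq')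
  qed
  show ?thesis using A B C D unfolding f_def by blast
qed

theorem proposition1:
  fixes R :: "nat set \<Rightarrow> (nat \<Rightarrow> real) \<Rightarrow> real \<Rightarrow> (nat \<Rightarrow> real)"
    and N :: "nat set" and c :: "nat \<Rightarrow> real" and E :: real
    and h :: "((nat \<Rightarrow> real) \<times> (nat \<Rightarrow> real)) list"
  assumes "standard_rule R"
    and "historical_claims_problem N c E h"
  defines "ct \<equiv> adjusted_claims c h"
  shows "(\<exists>lam::real. 0 \<le> lam \<and> (\<Sum>i\<in>N. min (c i) (R N ct E i + lam)) = E)
    \<and> (sum c N > E \<longrightarrow> (\<exists>!lam::real. 0 \<le> lam \<and> (\<Sum>i\<in>N. min (c i) (R N ct E i + lam)) = E))
    \<and> (sum c N = E \<longrightarrow>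
        (\<exists>l1 l2::real. 0 \<le> l1 \<and> 0 \<le> l2 \<and> l1 \<noteq> l2
           \<and> (\<Sum>i\<in>N. min (c i) (R N ct E i + l1)) = E
           \<and> (\<Sum>i\<in>N. min (c i) (R N ct E i + l2)) = E)
      \<and> (\<forall>l1 l2::real. 0 \<le> l1 \<and> 0 \<le> l2
           \<and> (\<Sum>i\<in>N. min (c i) (R N ct E i + l1)) = E
           \<and> (\<Sum>i\<in>N. min (c i) (R N ct E i + l2)) = E
           \<longrightarrow> (\<forall>i\<in>N. min (c i) (R N ct E i + l1) = min (c i) (R N ct E i + l2))))"
proof -
  have cp: "claims_problem N c E" and hh: "is_history N h"
    using assms(2) unfolding historical_claims_problem_def by auto
  have ge: "c i \<le> ct i" if "i \<in> N" for i
  proof -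
    have "(\<Sum>t<length h. snd (h ! t) i) \<le> (\<Sum>t<length h. fst (h ! t) i)"
    proof (intro sum_mono)
      fix t assume "t \<in> {..<length h}"
      then have "h ! t \<in> set h" by simp
      with hh that show "snd (h ! t) i \<le> fst (h ! t) i"
        unfolding is_history_def is_allocation_def by (cases "h ! t") fastforce
    qed
    then show ?thesis unfolding ct_def adjusted_claims_def by simp
  qed
  have sge: "sum c N \<le> sum ct N" using ge by (intro sum_mono) auto
  have cpt: "claims_problem N ct E"
    using cp ge sge unfolding claims_problem_def by (auto intro: order_trans)
  then have al: "is_allocation N ct E (R N ct E)"
    using assms(1) unfolding standard_rule_def by blast
  show ?thesis
    apply (rule key)
    using cp al unfolding claims_problem_def is_allocation_def by auto
qed

end
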